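(* Consider the oLBFGS iteration described in the context and let $\hat B_t$ denote its Hessian approximation. If Assumption A holds, then for all times $t\ge1$, $\operatorname{tr}(\hat B_t)\le (n+\tau)\tilde M$ and $\det(\hat B_t)\ge \frac{\tilde m^{\,n+\tau}}{[(n+\tau)\tilde M]^{\tau}}$.
   Context: Let $\theta$ be a random variable with values in a set $\Theta$, $f:\mathbb{R}^n\times\Theta\to\mathbb{R}$, and $F(w)=\mathbb{E}_\theta[f(w,\theta)]$. Fix a sample size $L\ge1$ and memory $\tau\ge1$. For $\tilde\theta=(\theta_1,\dots,\theta_L)\in\Theta^L$ put $\hat f(w,\tilde\theta)=\frac1L\sum_{l=1}^L f(w,\theta_l)$ and $\hat s(w,\tilde\theta)=\frac1L\sum_{l=1}^L\nabla_w f(w,\theta_l)$. oLBFGS: starting from $w_0\in\mathbb{R}^n$, at each $t\ge0$ draw $\tilde\theta_t$ consisting of $L$ independent samples of $\theta$, set $w_{t+1}=w_t-\epsilon_t\hat B_t^{-1}\hat s(w_t,\tilde\theta_t)$ with step sizes $\epsilon_t>0$, and set $v_t=w_{t+1}-w_t$, $\hat r_t=\hat s(w_{t+1},\tilde\theta_t)-\hat s(w_t,\tilde\theta_t)$. The Hessian approximation $\hat B_t$ is built as follows: let $\tau_t=\min(\tau,t)$; set $\hat B_{t,0}=\hat\gamma_t^{-1}I$ with $\hat\gamma_0=1$ and $\hat\gamma_t=v_{t-1}^T\hat r_{t-1}/\|\hat r_{t-1}\|^2$ for $t\ge1$; for $u=0,\dots,\tau_t-1$, with $s=t-\tau_t+u$,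 set $\hat B_{t,u+1}=\hat B_{t,u}-\frac{\hat B_{t,u}v_sv_s^T\hat B_{t,u}}{v_s^T\hat B_{t,u}v_s}+\frac{\hat r_s\hat r_s^T}{v_s^T\hat r_s}$; finally $\hat B_t=\hat B_{t,\tau_t}$, and $\hat B_t^{-1}$ is its inverse (equivalently obtained from $\hat B_{t,0}^{-1}=\hat\gamma_tI$ by $\hat B_{t,u+1}^{-1}=\hat Z_s^T\hat B_{t,u}^{-1}\hat Z_s+\hat\rho_sv_sv_s^T$ with $\hat\rho_s=1/(v_s^T\hat r_s)$, $\hat Z_s=I-\hat\rho_s\hat r_sv_s^T$). Assumption A: for every $\tilde\theta\in\Theta^L$ the function $w\mapsto\hat f(w,\tilde\theta)$ is twice differentiable and there are constants $0<\tilde m\le\tilde M<\infty$ with $\tilde mI\preceq\nabla_w^2\hat f(w,\tilde\theta)\preceq\tilde MI$ for all $w$ and all $\tilde\theta$. *)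

theory Defs
  imports "HOL-Analysis.Analysis"
begin

definition fhat :: "(real^'n \<Rightarrow> 'th \<Rightarrow> real) \<Rightarrow> nat \<Rightarrow> (nat \<Rightarrow> 'th) \<Rightarrow> real^'n \<Rightarrow> real" where
  "fhat f L th w = (1 / real L) * (\<Sum>l<L. f w (th l))"

definition shat :: "(real^'n \<Rightarrow> 'th \<Rightarrow> real^'n) \<Rightarrow> nat \<Rightarrow> (nat \<Rightarrow> 'th) \<Rightarrow> real^'n \<Rightarrow> real^'n" where
  "shat g L th w = (1 / real L) *\<^sub>R (\<Sum>l<L. g w (th l))"

definition outer :: "real^'n \<Rightarrow> real^'n \<Rightarrow> real^'n^'n" where
  "outer x y = (\<chi> i j. x $ i * y $ j)"

definition olbfgs_v :: "(nat \<Rightarrow> real^'n) \<Rightarrow> nat \<Rightarrow> real^'n" where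
  "olbfgs_v w t = w (Suc t) - w t"

definition olbfgs_r :: "(real^'n \<Rightarrow> 'th \<Rightarrow> real^'n) \<Rightarrow> nat \<Rightarrow> (nat \<Rightarrow> nat \<Rightarrow> 'th) \<Rightarrow> (nat \<Rightarrow> real^'n) \<Rightarrow> nat \<Rightarrow> real^'n" where
  "olbfgs_r g L ths w t = shat g L (ths t) (w (Suc t)) - shat g L (ths t) (w t)"

definition olbfgs_gamma :: "(real^'n \<Rightarrow> 'th \<Rightarrow> real^'n) \<Rightarrow> nat \<Rightarrow> (nat \<Rightarrow> nat \<Rightarrow> 'th) \<Rightarrow> (nat \<Rightarrow> real^'n) \<Rightarrow> nat \<Rightarrow> real" where
  "olbfgs_gamma g L ths w t =
     (if t = 0 then 1
      else (olbfgs_v w (t - 1) \<bullet> olbfgs_r g L ths w (t - 1)) / (norm (olbfgs_r g L ths w (t - 1)))\<^sup>2)"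

definition bfgs_update :: "real^'n^'n \<Rightarrow> real^'n \<Rightarrow> real^'n \<Rightarrow> real^'n^'n" where
  "bfgs_update B v r =
     B - (1 / (v \<bullet> (B *v v))) *\<^sub>R outer (B *v v) (v v* B) + (1 / (v \<bullet> r)) *\<^sub>R outer r r"

primrec olbfgs_Bu :: "(real^'n \<Rightarrow> 'th \<Rightarrow> real^'n) \<Rightarrow> nat \<Rightarrow> (nat \<Rightarrow> nat \<Rightarrow> 'th) \<Rightarrow> nat \<Rightarrow> (nat \<Rightarrow> real^'n) \<Rightarrow> nat \<Rightarrow> nat \<Rightarrow> real^'n^'n" where
  "olbfgs_Bu g L ths tau w t 0 = inverse (olbfgs_gamma g L ths w t) *\<^sub>R mat 1"
| "olbfgs_Bu g L ths tau w t (Suc u) =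
     bfgs_update (olbfgs_Bu g L ths tau w t u)
       (olbfgs_v w (t - min tau t + u)) (olbfgs_r g L ths w (t - min tau t + u))"

definition olbfgs_B :: "(real^'n \<Rightarrow> 'th \<Rightarrow> real^'n) \<Rightarrow> nat \<Rightarrow> (nat \<Rightarrow> nat \<Rightarrow> 'th) \<Rightarrow> nat \<Rightarrow> (nat \<Rightarrow> real^'n) \<Rightarrow> nat \<Rightarrow> real^'n^'n" where
  "olbfgs_B g L ths tau w t = olbfgs_Bu g L ths tau w t (min tau t)"

end

theory Submission
  imports Defs
begin


lemma row_lambda[simp]: "row i (\<chi> k. f k) = f i"
  by (simp add: row_def vec_eq_iff)

lemma det_rows_span_aux:
  fixes A :: "real^'n^'n" and x :: "'n \<Rightarrow> real^'n" and S T :: "'n set"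
  assumes sp: "\<And>i. i \<in> S \<Longrightarrow> x i \<in> vec.span {row j A | j. j \<notin> S}"
  shows "finite T \<Longrightarrow> T \<subseteq> S \<Longrightarrow> det (\<chi> k. if k \<in> T then row k A + x k else row k A) = det A"
proof (induction T rule: finite_induct)
  case empty
  have "(\<chi> k. if k \<in> {} then row k A + x k else row k A) = A" by (simp add: row_def vec_eq_iff)
  then show ?case by simp
next
  case (insert j T)
  let ?C = "(\<chi> k. if k \<in> T then row k A + x k else row k A)"
  have jS: "j \<in> S" and TS: "T \<subseteq> S" using insert by auto
  have eq: "(\<chi> k. if k \<in> insert j T then row k A + x k else row k A)
      = (\<chi> k. if k = j then row j ?C + x j else row k ?C)"
    using insert(2) by (simp add: vec_eq_iff)
  have "{row l A | l. l \<notin> S} \<subseteq> {row l ?C | l. l \<noteq> j}"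
  proof
    fix z assume "z \<in> {row l A | l. l \<notin> S}"
    then obtain l where "l \<notin> S" "z = row l A" by blast
    then show "z \<in> {row l ?C | l. l \<noteq> j}" using jS TS
      by (intro CollectI exI[of _ l]) auto
  qed
  then have "x j \<in> vec.span {row l ?C | l. l \<noteq> j}"
    using sp[OF jS] vec.span_mono by blast
  then have "det (\<chi> k. if k = j then row j ?C + x j else row k ?C) = det ?C"
    by (rule det_row_span)
  then show ?case using eq insert TS by simp
qed

lemma det_rows_span:
  fixes A :: "real^'n^'n" and x :: "'n \<Rightarrow> real^'n" and S :: "'n set"
  assumes sp: "\<And>i. i \<in> S \<Longrightarrow> x i \<in> vec.span {row j A | j. j \<notin> S}"
  shows "det (\<chi> k. if k \<in> S then row k A + x k else row k A) = det A"
  by (rule det_rows_span_aux[where S=S and x=x and A=A and T=S, OF sp]) auto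

lemma span_row_k: "c *s row k (A::real^'n^'n) \<in> vec.span {row j A | j. j \<notin> - {k}}"
  by (rule vec.span_scale, rule vec.span_base) auto

lemma det_outer_id:
  fixes x y :: "real^'n"
  shows "det (mat 1 + outer x y) = 1 + x \<bullet> y"
proof (cases "x = 0")
  case True
  then have "outer x y = 0" by (simp add: outer_def vec_eq_iff)
  then show ?thesis using True by simp
next
  case False
  then obtain k where xk: "x $ k \<noteq> 0" by (auto simp: vec_eq_iff)
  define c where "c i = x $ i / x $ k" for i
  define D :: "real^'n^'n" where "D = (\<chi> i. if i = k then axis k 1 else axis i 1 - c i *s axis k 1)"
  have rowI: "row i (mat 1 :: real^'n^'n) = axis i 1" for i
    by (simp add: row_def mat_def axis_def vec_eq_iff)
  have D_eq: "D = (\<chi> i. if i \<in> - {k} then row i (mat 1) + (- c i) *s row k (mat 1) else row i (mat 1))"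
    by (simp add: D_def rowI vec_eq_iff)
  have "det D = det (mat 1 :: real^'n^'n)"
    unfolding D_eq
    by (rule det_rows_span, rule span_row_k)
  then have detD: "det D = 1" by simp
  define z :: "real^'n" where "z = (\<chi> j. if j = k then 1 + x \<bullet> y else x $ k * y $ j)"
  define C :: "real^'n^'n" where "C = (\<chi> i. if i = k then sum (\<lambda>i. z$i *s row i D) UNIV else row i D)"
  have detC: "det C = z $ k * det D"
    unfolding C_def by (rule cramer_lemma_transpose)
  have rowD: "row i D = (if i = k then axis k 1 else axis i 1 - c i *s axis k 1)" for i
    by (simp add: D_def)
  have sumrow: "sum (\<lambda>i. z$i *s row i D) UNIV = axis k 1 + x $ k *s y"
  proof (subst vec_eq_iff, intro allI)
    fix j
    have "sum (\<lambda>i. z$i *s row i D) UNIV $ j = (\<Sum>i\<in>UNIV. z$i * (row i D $ j))"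
      by (simp add: sum_component)
    also have "\<dots> = z $ k * (row k D $ j) + (\<Sum>i\<in>UNIV - {k}. z$i * (row i D $ j))"
      by (simp add: sum.remove)
    also have "\<dots> = (axis k 1 + x $ k *s y) $ j"
    proof (cases "j = k")
      case True
      have "(\<Sum>i\<in>UNIV - {k}. z$i * (row i D $ j)) = - (\<Sum>i\<in>UNIV - {k}. x$i * y$i)"
        unfolding sum_negf[symmetric]
        by (rule sum.cong) (use True xk in \<open>auto simp: rowD z_def c_def axis_def\<close>)
      moreover have "x \<bullet> y = x$k * y$k + (\<Sum>i\<in>UNIV - {k}. x$i * y$i)"
        by (simp add: inner_vec_def sum.remove)
      ultimately show ?thesis using True by (simp add: rowD z_def axis_def)
    next
      case False
      have "(\<Sum>i\<in>UNIV - {k}. z$i * (row i D $ j)) = (\<Sum>i\<in>UNIV - {k}. if i = j then x$k * y$j else 0)"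
        by (rule sum.cong) (use False in \<open>auto simp: rowD z_def c_def axis_def\<close>)
      also have "\<dots> = x$k * y$j" using False by (simp add: sum.delta)
      finally show ?thesis using False by (simp add: rowD axis_def)
    qed
    finally show "sum (\<lambda>i. z$i *s row i D) UNIV $ j = (axis k 1 + x $ k *s y) $ j" .
  qed
  have rowC: "row i C = (if i = k then axis k 1 + x $ k *s y else axis i 1 - c i *s axis k 1)" for i
  proof -
    have "row i C = (if i = k then sum (\<lambda>i. z$i *s row i D) UNIV else row i D)"
      by (simp add: C_def)
    also have "\<dots> = (if i = k then axis k 1 + x $ k *s y else row i D)"
      by (subst sumrow) (rule refl)
    finally show ?thesis by (simp add: rowD)
  qed
  have A_eq: "mat 1 + outer x y = (\<chi> i. if i \<in> - {k} then row i C + c i *s row k C else row i C)"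
    using xk by (simp add: vec_eq_iff rowC outer_def mat_def axis_def c_def field_simps)
  have "det (mat 1 + outer x y) = det C"
    unfolding A_eq
    by (rule det_rows_span, rule span_row_k)
  also have "\<dots> = 1 + x \<bullet> y" using detC detD by (simp add: z_def)
  finally show ?thesis .
qed



lemma mv_add: "((A::real^'n^'m) + B) *v x = A *v x + B *v x"
  by (simp add: matrix_vector_mult_def vec_eq_iff sum.distrib algebra_simps)
lemma mv_diff: "((A::real^'n^'m) - B) *v x = A *v x - B *v x"
  by (simp add: matrix_vector_mult_def vec_eq_iff sum_subtractf algebra_simps)
lemma mv_scaleR: "((c::real) *\<^sub>R (A::real^'n^'m)) *v x = c *\<^sub>R (A *v x)"
  by (simp add: matrix_vector_mult_def vec_eq_iff sum_distrib_left algebra_simps)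
lemma outer_mv: "outer a b *v (z::real^'n) = (b \<bullet> z) *\<^sub>R a"
  by (simp add: outer_def matrix_vector_mult_def inner_vec_def vec_eq_iff sum_distrib_left mult_ac)
lemma mat_outer: "(A::real^'n^'n) ** outer a b = outer (A *v a) b"
  by (simp add: outer_def matrix_matrix_mult_def matrix_vector_mult_def vec_eq_iff sum_distrib_right mult.assoc)
lemma mv_scaleR_right: "(A::real^'n^'m) *v ((c::real) *\<^sub>R x) = c *\<^sub>R (A *v x)"
  by (simp add: matrix_vector_mult_def vec_eq_iff sum_distrib_left algebra_simps)
lemma mv_diff_right: "(A::real^'n^'m) *v (x - y) = A *v x - A *v y"
  by (simp add: matrix_vector_mult_def vec_eq_iff sum_subtractf algebra_simps)
lemma mv_minus_right: "(A::real^'n^'m) *v (- x) = - (A *v x)"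
  by (simp add: matrix_vector_mult_def vec_eq_iff sum_negf[symmetric])
lemma outer_outer: "outer a b ** outer c d = ((b::real^'n) \<bullet> c) *\<^sub>R outer a d"
  by (simp add: outer_def matrix_matrix_mult_def inner_vec_def vec_eq_iff sum_distrib_right sum_distrib_left mult_ac)
lemma trace_outer: "trace (outer a b) = (a::real^'n) \<bullet> b"
  by (simp add: trace_def outer_def inner_vec_def)
lemma trace_scaleR: "trace ((c::real) *\<^sub>R (A::real^'n^'n)) = c * trace A"
  by (simp add: trace_def sum_distrib_left)
lemma transpose_outer: "transpose (outer a b) = outer b a"
  by (simp add: transpose_def outer_def vec_eq_iff)
lemma transpose_add': "transpose ((A::real^'n^'n) + B) = transpose A + transpose B"
  by (simp add: transpose_def vec_eq_iff)
lemma transpose_diff': "transpose ((A::real^'n^'n) - B) = transpose A - transpose B"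
  by (simp add: transpose_def vec_eq_iff)
lemma inner_sym_mv:
  assumes "transpose B = B"
  shows "x \<bullet> ((B::real^'n^'n) *v y) = y \<bullet> (B *v x)"
proof -
  have "x \<bullet> (B *v y) = (x v* B) \<bullet> y" by (simp add: dot_lmul_matrix)
  also have "x v* B = B *v x" using transpose_matrix_vector[of B x] assms by simp
  finally show ?thesis by (simp add: inner_commute)
qed
lemma vm_sym:
  assumes "transpose B = B"
  shows "v v* (B::real^'n^'n) = B *v v"
  using transpose_matrix_vector[of B v] assms by simp

definition pdm :: "real^'n^'n \<Rightarrow> bool" where
  "pdm B \<longleftrightarrow> transpose B = B \<and> (\<forall>x. x \<noteq> 0 \<longrightarrow> 0 < x \<bullet> (B *v x))"

lemma pdm_nonneg: "pdm B \<Longrightarrow> 0 \<le> x \<bullet> (B *v x)"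
  unfolding pdm_def by (cases "x = 0") (auto intro: less_imp_le)

lemma bfgs_mv:
  assumes "transpose B = B"
  shows "bfgs_update B v r *v x = B *v x - (((B *v v) \<bullet> x) / (v \<bullet> (B *v v))) *\<^sub>R (B *v v)
           + ((r \<bullet> x) / (v \<bullet> r)) *\<^sub>R r"
  unfolding bfgs_update_def
  by (simp add: mv_add mv_diff mv_scaleR outer_mv vm_sym[OF assms])

lemma bfgs_props:
  fixes B :: "real^'n^'n"
  assumes B: "pdm B" and v: "v \<noteq> 0" and vr: "v \<bullet> r > 0"
  shows "pdm (bfgs_update B v r)"
    and "trace (bfgs_update B v r) = trace B - (norm (B *v v))\<^sup>2 / (v \<bullet> (B *v v)) + (norm r)\<^sup>2 / (v \<bullet> r)"
    and "det (bfgs_update B v r) = det B * (v \<bullet> r) / (v \<bullet> (B *v v))"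
proof -
  have sym: "transpose B = B" using B by (simp add: pdm_def)
  define \<beta> where "\<beta> = v \<bullet> (B *v v)"
  have \<beta>: "\<beta> > 0" using B v by (simp add: pdm_def \<beta>_def)
  define \<rho> where "\<rho> = v \<bullet> r"
  have \<rho>: "\<rho> > 0" using vr by (simp add: \<rho>_def)
  let ?B' = "bfgs_update B v r"
  have quad: "x \<bullet> (?B' *v x) = x \<bullet> (B *v x) - ((B *v v) \<bullet> x)\<^sup>2 / \<beta> + (r \<bullet> x)\<^sup>2 / \<rho>" for x
    unfolding bfgs_mv[OF sym] \<beta>_def[symmetric] \<rho>_def[symmetric]
    by (simp add: inner_diff_right inner_add_right power2_eq_square inner_commute)
  have key: "x \<bullet> (B *v x) - ((B *v v) \<bullet> x)\<^sup>2 / \<beta> = y \<bullet> (B *v y)"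
    if "y = x - (((B *v v) \<bullet> x) / \<beta>) *\<^sub>R v" for x y
  proof -
    have s: "v \<bullet> (B *v x) = (B *v v) \<bullet> x" using inner_sym_mv[OF sym, of v x] by (simp add: inner_commute)
    show ?thesis using \<beta> unfolding that
      by (simp add: mv_diff_right inner_diff_left inner_diff_right
          mv_scaleR_right s \<beta>_def[symmetric] power2_eq_square field_simps inner_commute)
  qed
  show "pdm ?B'"
    unfolding pdm_def
  proof (intro conjI allI impI)
    show "transpose ?B' = ?B'"
      unfolding bfgs_update_def
      by (simp add: transpose_add' transpose_diff' transpose_scalar transpose_outer vm_sym[OF sym] sym)
  next
    fix x :: "real^'n" assume x: "x \<noteq> 0"
    define y where "y = x - (((B *v v) \<bullet> x) / \<beta>) *\<^sub>R v"
    have q: "x \<bullet> (?B' *v x) = y \<bullet> (B *v y) + (r \<bullet> x)\<^sup>2 / \<rho>"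
      using quad key[OF y_def] by simp
    have y0: "0 \<le> y \<bullet> (B *v y)" using pdm_nonneg[OF B] .
    have r0: "0 \<le> (r \<bullet> x)\<^sup>2 / \<rho>" using \<rho> by simp
    show "0 < x \<bullet> (?B' *v x)"
    proof (rule ccontr)
      assume "\<not> 0 < x \<bullet> (?B' *v x)"
      then have "y \<bullet> (B *v y) = 0" and "(r \<bullet> x)\<^sup>2 / \<rho> = 0" using q y0 r0 by linarith+
      then have "y = 0" and rx: "r \<bullet> x = 0" using B \<rho> unfolding pdm_def by auto
      then have xe: "x = (((B *v v) \<bullet> x) / \<beta>) *\<^sub>R v" by (simp add: y_def)
      then have "r \<bullet> x = (((B *v v) \<bullet> x) / \<beta>) * \<rho>" by (metis \<rho>_def inner_commute inner_scaleR_right)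
      then have "(B *v v) \<bullet> x = 0" using rx \<rho> \<beta> by simp
      then have "x = 0" using xe by simp
      then show False using x by simp
    qed
  qed
  show "trace ?B' = trace B - (norm (B *v v))\<^sup>2 / (v \<bullet> (B *v v)) + (norm r)\<^sup>2 / (v \<bullet> r)"
    unfolding bfgs_update_def
    by (simp add: trace_add trace_sub trace_scaleR trace_outer vm_sym[OF sym] power2_norm_eq_inner)
  show "det ?B' = det B * (v \<bullet> r) / (v \<bullet> (B *v v))"
  proof -
    have "\<forall>x. B *v x = 0 \<longrightarrow> x = 0"
    proof (intro allI impI)
      fix x assume "B *v x = 0"
      then have "x \<bullet> (B *v x) = 0" by simp
      then show "x = 0" using B unfolding pdm_def by (metis less_irrefl)
    qed
    then obtain C where "C ** B = mat 1" using matrix_left_invertible_ker by blast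
    then have "B ** C = mat 1" using matrix_left_right_inverse by blast
    define q where "q = C *v r"
    have Bq: "B *v q = r" unfolding q_def using \<open>B ** C = mat 1\<close>
      by (simp add: matrix_vector_mul_assoc)
    define p where "p = - v"
    define c where "c = (1 / \<rho>) *\<^sub>R r"
    define a where "a = (1 / \<beta>) *\<^sub>R (B *v v)"
    define g where "g = 1 + c \<bullet> q"
    have rq: "0 \<le> r \<bullet> q" using pdm_nonneg[OF B, of q] Bq by (simp add: inner_commute)
    have g: "g > 0" unfolding g_def c_def using rq \<rho> by (simp add: add_pos_nonneg)
    define y where "y = a - ((a \<bullet> q) / g) *\<^sub>R c"
    have aq: "a \<bullet> q = \<rho> / \<beta>"
      unfolding a_def using inner_sym_mv[OF sym, of q v] Bq
      by (simp add: \<rho>_def inner_commute)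
    have yq: "y \<bullet> q = (a \<bullet> q) / g"
      using g unfolding y_def g_def by (simp add: inner_diff_left field_simps)
    have fact: "?B' = B ** ((mat 1 + outer p y) ** (mat 1 + outer q c))"
    proof (subst matrix_eq, intro allI)
      fix x
      have "B ** ((mat 1 + outer p y) ** (mat 1 + outer q c)) *v x
          = B *v (x + (c \<bullet> x) *\<^sub>R q + (y \<bullet> x + (c \<bullet> x) * (y \<bullet> q)) *\<^sub>R p)"
        by (simp add: matrix_vector_mul_assoc[symmetric] mv_add outer_mv inner_add_right algebra_simps)
      also have "\<dots> = B *v x + (c \<bullet> x) *\<^sub>R r - (y \<bullet> x + (c \<bullet> x) * (y \<bullet> q)) *\<^sub>R (B *v v)"
        by (simp add: p_def matrix_vector_right_distrib mv_scaleR_right Bq mv_diff_right mv_minus_right)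
      also have "y \<bullet> x + (c \<bullet> x) * (y \<bullet> q) = ((B *v v) \<bullet> x) / \<beta>"
        unfolding yq using g unfolding y_def a_def by (simp add: inner_diff_left field_simps)
      also have "(c \<bullet> x) *\<^sub>R r = ((r \<bullet> x) / \<rho>) *\<^sub>R r" by (simp add: c_def)
      finally show "?B' *v x = B ** ((mat 1 + outer p y) ** (mat 1 + outer q c)) *v x"
        unfolding bfgs_mv[OF sym] \<beta>_def \<rho>_def by (simp add: algebra_simps)
    qed
    have "det ?B' = det B * ((1 + p \<bullet> y) * (1 + q \<bullet> c))"
      unfolding fact det_mul det_outer_id by simp
    also have "1 + q \<bullet> c = g" by (simp add: g_def inner_commute)
    also have "1 + p \<bullet> y = (a \<bullet> q) / g"
    proof -
      have va: "v \<bullet> a = 1" using \<beta> by (simp add: a_def \<beta>_def)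
      have vc: "v \<bullet> c = 1" using \<rho> by (simp add: c_def \<rho>_def)
      show ?thesis unfolding p_def y_def by (simp add: inner_diff_right va vc)
    qed
    finally show ?thesis using g \<beta> by (simp add: aq \<beta>_def \<rho>_def)
  qed
qed



lemma axis_mv_axis: "axis i 1 \<bullet> ((B::real^'n^'n) *v axis j 1) = B $ i $ j"
proof -
  have "B *v axis j 1 = (\<chi> k. B$k$j)"
    by (simp add: matrix_vector_mult_def axis_def vec_eq_iff if_distrib[of "\<lambda>x. _ * x"] cong: if_cong)
  then show ?thesis by (simp add: inner_axis')
qed

lemma quad_le_trace:
  fixes B :: "real^'n^'n"
  assumes B: "pdm B"
  shows "v \<bullet> (B *v v) \<le> trace B * (norm v)\<^sup>2"
proof -
  have sym: "B $ j $ i = B $ i $ j" for i j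
    using B unfolding pdm_def by (metis transpose_def vec_lambda_beta)
  define w where "w i j = v$j *\<^sub>R axis i (1::real) - v$i *\<^sub>R axis j 1" for i j
  have e: "w i j \<bullet> (B *v w i j) = (v$j)^2 * B$i$i + (v$i)^2 * B$j$j - 2 * (v$i * v$j * B$i$j)" for i j
    unfolding w_def
    by (simp add: mv_diff_right mv_scaleR_right inner_diff_left inner_diff_right axis_mv_axis
        sym[of i j] power2_eq_square algebra_simps)
  have nv: "(norm v)\<^sup>2 = (\<Sum>j\<in>UNIV. (v$j)^2)"
    unfolding power2_norm_eq_inner inner_vec_def by (simp add: power2_eq_square)
  have h0: "0 \<le> (\<Sum>i\<in>UNIV. \<Sum>j\<in>UNIV. w i j \<bullet> (B *v w i j))"
    by (intro sum_nonneg pdm_nonneg[OF B])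
  have h1: "(\<Sum>i\<in>UNIV. \<Sum>j\<in>UNIV. w i j \<bullet> (B *v w i j)) = (\<Sum>i\<in>UNIV. \<Sum>j\<in>UNIV. (v$j)^2 * B$i$i) + (\<Sum>i\<in>UNIV. \<Sum>j\<in>UNIV. (v$i)^2 * B$j$j)
       - 2 * (\<Sum>i\<in>UNIV. \<Sum>j\<in>UNIV. v$i * v$j * B$i$j)"
    by (simp add: e sum.distrib sum_subtractf sum_distrib_left)
  have h2: "(\<Sum>i\<in>UNIV. \<Sum>j\<in>UNIV. (v$j)^2 * B$i$i) = trace B * (norm v)\<^sup>2"
    unfolding nv trace_def by (simp add: sum_distrib_left sum_distrib_right mult_ac) (rule sum.swap)
  have h3: "(\<Sum>i\<in>UNIV. \<Sum>j\<in>UNIV. (v$i)^2 * B$j$j) = (\<Sum>j\<in>UNIV. \<Sum>i\<in>UNIV. (v$i)^2 * B$j$j)"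
    by (rule sum.swap)
  have h4: "(\<Sum>j\<in>UNIV. \<Sum>i\<in>UNIV. (v$i)^2 * B$j$j) = trace B * (norm v)\<^sup>2"
    unfolding nv trace_def by (simp add: sum_distrib_left sum_distrib_right mult_ac) (rule sum.swap)
  have h5: "(\<Sum>i\<in>UNIV. \<Sum>j\<in>UNIV. v$i * v$j * B$i$j) = v \<bullet> (B *v v)"
    by (simp add: inner_vec_def matrix_vector_mult_def sum_distrib_left mult_ac)
  show ?thesis using h0 h1 h2 h3 h4 h5 by linarith
qed



lemma secant_bounds:
  fixes F :: "real^'n \<Rightarrow> real^'n"
  assumes A: "\<And>x. \<exists>D. (F has_derivative D) (at x) \<and> (\<forall>y z. y \<bullet> D z = z \<bullet> D y)
                 \<and> (\<forall>y. m * (norm y)\<^sup>2 \<le> y \<bullet> D y \<and> y \<bullet> D y \<le> M * (norm y)\<^sup>2)"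
    and M: "M > 0" and m0: "0 \<le> m"
  shows "m * (norm v)\<^sup>2 \<le> v \<bullet> (F (a + v) - F a)"
    and "(norm (F (a + v) - F a))\<^sup>2 \<le> M * (v \<bullet> (F (a + v) - F a))"
proof -
  obtain DD where DD: "\<And>x. (F has_derivative DD x) (at x) \<and> (\<forall>y z. y \<bullet> DD x z = z \<bullet> DD x y)
                 \<and> (\<forall>y. m * (norm y)\<^sup>2 \<le> y \<bullet> DD x y \<and> y \<bullet> DD x y \<le> M * (norm y)\<^sup>2)"
    using A by metis
  have lin: "linear (DD x)" for x
    using DD[of x] has_derivative_bounded_linear bounded_linear.linear by blast
  have der: "((\<lambda>\<tau>. k \<bullet> F (a + \<tau> *\<^sub>R v)) has_real_derivative (k \<bullet> DD (a + \<tau> *\<^sub>R v) v)) (at \<tau>)"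
    for k \<tau>
  proof -
    have p: "((\<lambda>\<tau>. a + \<tau> *\<^sub>R v) has_derivative (\<lambda>h. h *\<^sub>R v)) (at \<tau>)"
      by (auto intro!: derivative_eq_intros)
    have "((\<lambda>\<tau>. F (a + \<tau> *\<^sub>R v)) has_derivative (\<lambda>h. DD (a + \<tau> *\<^sub>R v) (h *\<^sub>R v))) (at \<tau>)"
      using has_derivative_compose[OF p] DD by blast
    then have "((\<lambda>\<tau>. k \<bullet> F (a + \<tau> *\<^sub>R v)) has_derivative (\<lambda>h. k \<bullet> DD (a + \<tau> *\<^sub>R v) (h *\<^sub>R v))) (at \<tau>)"
      by (rule has_derivative_inner_right)
    moreover have "(\<lambda>h. k \<bullet> DD (a + \<tau> *\<^sub>R v) (h *\<^sub>R v)) = (*) (k \<bullet> DD (a + \<tau> *\<^sub>R v) v)"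
      using linear_cmul[OF lin] by (auto simp: fun_eq_iff)
    ultimately show ?thesis
      by (simp add: has_field_derivative_def)
  qed
  have mvt: "\<exists>z. k \<bullet> (F (a + v) - F a) = k \<bullet> DD (a + z *\<^sub>R v) v" for k
  proof -
    from MVT2[of 0 1 "\<lambda>\<tau>. k \<bullet> F (a + \<tau> *\<^sub>R v)" "\<lambda>\<tau>. k \<bullet> DD (a + \<tau> *\<^sub>R v) v"] der
    obtain z where "k \<bullet> F (a + 1 *\<^sub>R v) - k \<bullet> F (a + 0 *\<^sub>R v) = (1 - 0) * (k \<bullet> DD (a + z *\<^sub>R v) v)"
      by auto
    then show ?thesis by (auto simp: inner_diff_right)
  qed
  show "m * (norm v)\<^sup>2 \<le> v \<bullet> (F (a + v) - F a)"
    using mvt[of v] DD by metis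
  define r where "r = F (a + v) - F a"
  obtain z where z: "(r - (M/2) *\<^sub>R v) \<bullet> r = (r - (M/2) *\<^sub>R v) \<bullet> DD (a + z *\<^sub>R v) v"
    using mvt unfolding r_def by blast
  define D where "D = DD (a + z *\<^sub>R v)"
  have Dl: "linear D" unfolding D_def by (rule lin)
  have Ds: "y \<bullet> D w = w \<bullet> D y" for y w unfolding D_def using DD by blast
  have Db: "m * (norm y)\<^sup>2 \<le> y \<bullet> D y \<and> y \<bullet> D y \<le> M * (norm y)\<^sup>2" for y unfolding D_def using DD by blast
  have "0 \<le> (r - M *\<^sub>R v) \<bullet> D (r - M *\<^sub>R v)"
  proof -
    have "m * (norm (r - M *\<^sub>R v))\<^sup>2 \<le> (r - M *\<^sub>R v) \<bullet> D (r - M *\<^sub>R v)" using Db by blast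
    moreover note m0
    ultimately show ?thesis by (meson order_trans zero_le_mult_iff zero_le_power2)
  qed
  also have "(r - M *\<^sub>R v) \<bullet> D (r - M *\<^sub>R v) = r \<bullet> D r - 2 * M * (r \<bullet> D v) + M * M * (v \<bullet> D v)"
    using Ds[of v r] by (simp add: linear_diff[OF Dl] linear_cmul[OF Dl] inner_diff_left inner_diff_right algebra_simps)
  finally have "2 * M * (r \<bullet> D v) \<le> M * (norm r)\<^sup>2 + M * M * (v \<bullet> D v)"
    using Db[of r] by linarith
  then have "M * (2 * (r \<bullet> D v - (M/2) * (v \<bullet> D v))) \<le> M * (norm r)\<^sup>2" by (simp add: algebra_simps)
  then have "2 * (r \<bullet> D v - (M/2) * (v \<bullet> D v)) \<le> (norm r)\<^sup>2" using M by (simp add: mult_le_cancel_left_pos)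
  then have "r \<bullet> D v - (M/2) * (v \<bullet> D v) \<le> (norm r)\<^sup>2 / 2" by simp
  moreover have "(r - (M/2) *\<^sub>R v) \<bullet> r = (norm r)\<^sup>2 - (M/2) * (v \<bullet> r)"
    by (simp add: inner_diff_left power2_norm_eq_inner inner_commute[of v r])
  moreover have "(r - (M/2) *\<^sub>R v) \<bullet> D v = r \<bullet> D v - (M/2) * (v \<bullet> D v)"
    by (simp add: inner_diff_left)
  ultimately show "(norm (F (a + v) - F a))\<^sup>2 \<le> M * (v \<bullet> (F (a + v) - F a))"
    using z unfolding D_def r_def[symmetric] by (simp add: field_simps)
qed



lemma det_scaled_id: "det ((c::real) *\<^sub>R (mat 1 :: real^'n^'n)) = c ^ CARD('n)"
proof -
  have "det ((c::real) *\<^sub>R (mat 1 :: real^'n^'n)) = prod (\<lambda>i. (c *\<^sub>R (mat 1 :: real^'n^'n))$i$i) UNIV"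
    by (rule det_diagonal) (simp add: mat_def)
  then show ?thesis by (simp add: mat_def)
qed

theorem lemma3:
  fixes f :: "real^'n \<Rightarrow> 'th \<Rightarrow> real"
    and g :: "real^'n \<Rightarrow> 'th \<Rightarrow> real^'n"
    and L tau :: nat
    and m M :: real
    and ths :: "nat \<Rightarrow> nat \<Rightarrow> 'th"
    and eps :: "nat \<Rightarrow> real"
    and w :: "nat \<Rightarrow> real^'n"
    and t :: nat
  assumes L: "L \<ge> 1" and tau: "tau \<ge> 1"
    and grad: "\<And>x th. ((\<lambda>y. f y th) has_derivative (\<lambda>h. g x th \<bullet> h)) (at x)"
    and mM: "0 < m" "m \<le> M"
    and A: "\<And>th x. \<exists>D. (shat g L th has_derivative D) (at x)
                 \<and> (\<forall>y z. y \<bullet> D z = z \<bullet> D y)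
                 \<and> (\<forall>y. m * (norm y)\<^sup>2 \<le> y \<bullet> D y \<and> y \<bullet> D y \<le> M * (norm y)\<^sup>2)"
    and eps: "\<And>s. eps s > 0"
    and iter: "\<And>s. w (Suc s) = w s - eps s *\<^sub>R
                 (matrix_inv (olbfgs_B g L ths tau w s) *v shat g L (ths s) (w s))"
    and nondeg: "\<And>s. s < t \<Longrightarrow> w (Suc s) \<noteq> w s"
    and t: "t \<ge> 1"
  shows "trace (olbfgs_B g L ths tau w t) \<le> (real CARD('n) + real tau) * M
       \<and> det (olbfgs_B g L ths tau w t)
           \<ge> m ^ (CARD('n) + tau) / ((real CARD('n) + real tau) * M) ^ tau"
proof -
  let ?n = "real CARD('n)"
  let ?v = "olbfgs_v w" and ?r = "olbfgs_r g L ths w"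
  have M: "M > 0" using mM by linarith
  have vr: "m * (norm (?v s))\<^sup>2 \<le> ?v s \<bullet> ?r s \<and> (norm (?r s))\<^sup>2 \<le> M * (?v s \<bullet> ?r s)" for s
  proof -
    have ws: "w (Suc s) = w s + ?v s" by (simp add: olbfgs_v_def)
    have r: "?r s = shat g L (ths s) (w s + ?v s) - shat g L (ths s) (w s)"
      by (simp add: olbfgs_r_def ws[symmetric])
    show ?thesis unfolding r
      using secant_bounds[where F="shat g L (ths s)" and m=m and M=M, OF A M less_imp_le[OF mM(1)]]
      by blast
  qed
  have vpos: "?v s \<bullet> ?r s > 0" "?v s \<noteq> 0" if "s < t" for s
  proof -
    show v0: "?v s \<noteq> 0" using nondeg[OF that] by (simp add: olbfgs_v_def)
    have "0 < m * (norm (?v s))\<^sup>2" using v0 mM by simp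
    then show "?v s \<bullet> ?r s > 0" using vr[of s] by linarith
  qed
  have ratio: "m \<le> (norm (?r s))\<^sup>2 / (?v s \<bullet> ?r s) \<and> (norm (?r s))\<^sup>2 / (?v s \<bullet> ?r s) \<le> M"
    if "s < t" for s
  proof -
    have p: "?v s \<bullet> ?r s > 0" and v0: "?v s \<noteq> 0" using vpos[OF that] by auto
    have cs: "?v s \<bullet> ?r s \<le> norm (?v s) * norm (?r s)" by (rule norm_cauchy_schwarz)
    have "m * (norm (?v s))\<^sup>2 \<le> norm (?v s) * norm (?r s)" using vr[of s] cs by linarith
    then have "m * norm (?v s) \<le> norm (?r s)" using v0 by (simp add: power2_eq_square)
    then have "m * (norm (?v s) * norm (?r s)) \<le> norm (?r s) * norm (?r s)"
      by (metis mult.assoc mult_right_mono norm_ge_zero)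
    moreover have "m * (?v s \<bullet> ?r s) \<le> m * (norm (?v s) * norm (?r s))"
      using cs mM by simp
    ultimately have "m * (?v s \<bullet> ?r s) \<le> (norm (?r s))\<^sup>2" by (simp add: power2_eq_square)
    then show ?thesis using p vr[of s] by (simp add: field_simps)
  qed
  define \<rho> where "\<rho> = m / ((?n + real tau) * M)"
  have nt: "?n + real tau \<ge> 1" using tau by simp
  have \<rho>0: "0 \<le> \<rho>" using mM M nt by (simp add: \<rho>_def)
  have \<rho>1: "\<rho> \<le> 1"
  proof -
    have "M \<le> (?n + real tau) * M" using nt M by simp
    then show ?thesis using mM M nt unfolding \<rho>_def by (simp add: field_simps)
  qed
  let ?B = "olbfgs_Bu g L ths tau w t"
  have inv: "pdm (?B u) \<and> trace (?B u) \<le> (?n + real u) * M \<and> det (?B u) \<ge> m ^ CARD('n) * \<rho> ^ u"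
    if "u \<le> min tau t" for u
    using that
  proof (induction u)
    case 0
    define c where "c = (norm (?r (t - 1)))\<^sup>2 / (?v (t - 1) \<bullet> ?r (t - 1))"
    have tl: "t - 1 < t" using t by simp
    have c: "m \<le> c" "c \<le> M" using ratio[OF tl] by (auto simp: c_def)
    have r0: "?r (t - 1) \<noteq> 0" using vpos[OF tl] by auto
    have B0: "?B 0 = c *\<^sub>R mat 1"
      using t r0 by (simp add: olbfgs_gamma_def c_def)
    have cpos: "c > 0" using c mM by linarith
    have "pdm (?B 0)" unfolding B0 pdm_def
      using cpos by (simp add: mv_scaleR transpose_scalar)
    moreover have "trace (?B 0) \<le> (?n + real 0) * M"
      unfolding B0 trace_scaleR trace_I using c by (simp add: mult.commute mult_right_mono)
    moreover have "det (?B 0) \<ge> m ^ CARD('n) * \<rho> ^ 0"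
      unfolding B0 det_scaled_id using c mM by (simp add: power_mono)
    ultimately show ?case by blast
  next
    case (Suc u)
    then have IH: "pdm (?B u)" "trace (?B u) \<le> (?n + real u) * M" "det (?B u) \<ge> m ^ CARD('n) * \<rho> ^ u"
      by auto
    define s where "s = t - min tau t + u"
    have st: "s < t" using Suc.prems unfolding s_def by linarith
    have BS: "?B (Suc u) = bfgs_update (?B u) (?v s) (?r s)" by (simp add: s_def)
    have p: "?v s \<bullet> ?r s > 0" and v0: "?v s \<noteq> 0" using vpos[OF st] by auto
    note props = bfgs_props[OF IH(1) v0 p]
    define \<beta> where "\<beta> = ?v s \<bullet> (?B u *v ?v s)"
    have \<beta>: "\<beta> > 0" using IH(1) v0 by (simp add: pdm_def \<beta>_def)
    have \<beta>le: "\<beta> \<le> (?n + real tau) * M * (norm (?v s))\<^sup>2"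
    proof -
      have "\<beta> \<le> trace (?B u) * (norm (?v s))\<^sup>2" unfolding \<beta>_def by (rule quad_le_trace[OF IH(1)])
      also have "\<dots> \<le> (?n + real u) * M * (norm (?v s))\<^sup>2" using IH(2) by (simp add: mult_right_mono)
      also have "\<dots> \<le> (?n + real tau) * M * (norm (?v s))\<^sup>2"
        using Suc.prems M by (intro mult_right_mono) auto
      finally show ?thesis .
    qed
    have tr: "trace (?B (Suc u)) \<le> (?n + real (Suc u)) * M"
    proof -
      have "0 \<le> (norm (?B u *v ?v s))\<^sup>2 / \<beta>" using \<beta> by simp
      then show ?thesis unfolding BS props(2) \<beta>_def[symmetric]
        using IH(2) ratio[OF st] by (simp add: algebra_simps)
    qed
    have q: "\<rho> \<le> (?v s \<bullet> ?r s) / \<beta>"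
    proof -
      have "m * (norm (?v s))\<^sup>2 \<le> ?v s \<bullet> ?r s" using vr[of s] by blast
      have nv: "(norm (?v s))\<^sup>2 > 0" using v0 by simp
      have "\<rho> * \<beta> \<le> \<rho> * ((?n + real tau) * M * (norm (?v s))\<^sup>2)" using \<beta>le \<rho>0 by (rule mult_left_mono)
      also have "\<dots> = m * (norm (?v s))\<^sup>2"
      proof -
        have KM: "(?n + real tau) * M \<noteq> 0" using M nt by simp
        show ?thesis unfolding \<rho>_def using KM by (simp add: mult.assoc[symmetric])
      qed
      also have "\<dots> \<le> ?v s \<bullet> ?r s" using vr[of s] by blast
      finally show ?thesis using \<beta> by (simp add: field_simps)
    qed
    have dt: "det (?B (Suc u)) \<ge> m ^ CARD('n) * \<rho> ^ Suc u"
    proof -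
      have d: "det (?B (Suc u)) = det (?B u) * ((?v s \<bullet> ?r s) / \<beta>)"
        unfolding BS props(3) \<beta>_def by simp
      have "m ^ CARD('n) * \<rho> ^ Suc u = (m ^ CARD('n) * \<rho> ^ u) * \<rho>" by simp
      also have "\<dots> \<le> det (?B u) * ((?v s \<bullet> ?r s) / \<beta>)"
      proof -
        have "0 \<le> m ^ CARD('n) * \<rho> ^ u" using mM \<rho>0 by simp
        then have "0 \<le> det (?B u)" using IH(3) by linarith
        then show ?thesis using IH(3) q \<rho>0 mM by (intro mult_mono) auto
      qed
      finally show ?thesis using d by simp
    qed
    show ?case using props(1) BS tr dt by simp
  qed
  have fin: "olbfgs_B g L ths tau w t = ?B (min tau t)" by (simp add: olbfgs_B_def)
  note I = inv[OF order_refl, folded fin]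
  have "trace (olbfgs_B g L ths tau w t) \<le> (?n + real tau) * M"
    using I M by (meson add_le_cancel_left min.cobounded1 mult_right_mono of_nat_le_iff order_trans less_imp_le)
  moreover have "m ^ (CARD('n) + tau) / ((?n + real tau) * M) ^ tau \<le> det (olbfgs_B g L ths tau w t)"
  proof -
    have "m ^ (CARD('n) + tau) / ((?n + real tau) * M) ^ tau = m ^ CARD('n) * \<rho> ^ tau"
      by (simp add: \<rho>_def power_add power_divide)
    also have "\<dots> \<le> m ^ CARD('n) * \<rho> ^ min tau t"
      using \<rho>0 \<rho>1 mM by (intro mult_left_mono power_decreasing) auto
    also have "\<dots> \<le> det (olbfgs_B g L ths tau w t)" using I by blast
    finally show ?thesis .
  qed
  ultimately show ?thesis by blast
qed

end
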